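(* Let $G$ be a compactly generated locally compact group, $N$ a closed normal subgroup of $G$, and $\Gamma$ a connected graph of finite degree on which $G$ acts vertex-transitively by automorphisms. (1) If $\Gamma$ is a Cayley-Abels graph for $G$, then $\Gamma/N$ is a Cayley-Abels graph for $G/N$ (with the action induced from that of $G$ on $\Gamma/N$). (2) $\deg(\Gamma/N) \le \deg(\Gamma)$, with equality if and only if $N$ acts freely modulo kernel on $\Gamma$.
   Context: Graphs $\Gamma=(V,E,o,r)$: vertex set $V$, directed edge set $E$, initial-vertex map $o:E\to V$, involutive edge reversal $e\mapsto\bar e$; $\deg(v)=|o^{-1}(v)|$, $\deg(\Gamma)=\sup_v \deg(v)$. For a group $N$ acting on $\Gamma$, the quotient graph $\Gamma/N$ has as vertices the $N$-orbits on $V$ and as edges the $N$-orbits on $E$, with $o(Ne)=No(e)$, $\overline{Ne}=N\bar e$; if $N \trianglelefteq G$ the action of $G$ on $\Gamma/N$ factors through $G/N$. A Cayley-Abels graph for a locally compact group $G$ is a connected graph of finite degree on which $G$ acts vertex-transitively by automorphisms such that vertex stabilizers are open and connected-by-compact (i.e. a stabilizer $U$ satisfies that $U/G^\circ$ is compact; equivalently it is a Cayley-Abels graph for the totally disconnected group $G/G^\circ$ with compact open vertex stabilizers). A group $N$ acting on $\Gamma$ acts freely modulo kernel if for every vertex $v$, the stabilizer $N_{(v)}$ acts trivially on both the vertices and the edges of $\Gamma$. *)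

theory Defs
  imports "HOL-Analysis.Analysis" "HOL-Algebra.Coset" "HOL-Algebra.Generated_Groups"
          "HOL-Library.Extended_Nat"
begin

definition topological_group :: "('g,'m) monoid_scheme \<Rightarrow> 'g topology \<Rightarrow> bool" where
  "topological_group G T \<longleftrightarrow> group G \<and> topspace T = carrier G \<and>
     continuous_map (prod_topology T T) T (\<lambda>(x,y). x \<otimes>\<^bsub>G\<^esub> y) \<and>
     continuous_map T T (\<lambda>x. inv\<^bsub>G\<^esub> x)"

definition locally_compact_group :: "('g,'m) monoid_scheme \<Rightarrow> 'g topology \<Rightarrow> bool" where
  "locally_compact_group G T \<longleftrightarrow> topological_group G T \<and> Hausdorff_space T \<and>
     locally_compact_space T"

definition compactly_generated :: "('g,'m) monoid_scheme \<Rightarrow> 'g topology \<Rightarrow> bool" where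
  "compactly_generated G T \<longleftrightarrow>
     (\<exists>K. K \<subseteq> carrier G \<and> compactin T K \<and> generate G K = carrier G)"

text \<open>Quotient topology on G/N (cosets of N): a set of cosets is open iff its union
  (= its preimage under the projection) is open in G.\<close>
definition quot_top :: "('g,'m) monoid_scheme \<Rightarrow> 'g topology \<Rightarrow> 'g set \<Rightarrow> 'g set topology" where
  "quot_top G T N = topology (\<lambda>U. U \<subseteq> carrier (G Mod N) \<and> openin T (\<Union>U))"

definition identity_component :: "('g,'m) monoid_scheme \<Rightarrow> 'g topology \<Rightarrow> 'g set" where
  "identity_component G T = connected_component_of_set T \<one>\<^bsub>G\<^esub>"

definition connected_by_compact :: "('g,'m) monoid_scheme \<Rightarrow> 'g topology \<Rightarrow> 'g set \<Rightarrow> bool" where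
  "connected_by_compact G T U \<longleftrightarrow>
     (let G0 = identity_component G T in
        G0 \<subseteq> U \<and> compactin (quot_top G T G0) ((\<lambda>g. G0 #>\<^bsub>G\<^esub> g) ` U))"

definition graph :: "'v set \<Rightarrow> 'e set \<Rightarrow> ('e \<Rightarrow> 'v) \<Rightarrow> ('e \<Rightarrow> 'e) \<Rightarrow> bool" where
  "graph V E og rv \<longleftrightarrow> (\<forall>e\<in>E. og e \<in> V \<and> rv e \<in> E \<and> rv (rv e) = e)"

definition vdeg :: "'e set \<Rightarrow> ('e \<Rightarrow> 'v) \<Rightarrow> 'v \<Rightarrow> enat" where
  "vdeg E og v = (if finite {e\<in>E. og e = v} then enat (card {e\<in>E. og e = v}) else \<infinity>)"

definition gdeg :: "'v set \<Rightarrow> 'e set \<Rightarrow> ('e \<Rightarrow> 'v) \<Rightarrow> enat" where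
  "gdeg V E og = (SUP v\<in>V. vdeg E og v)"

definition finite_degree :: "'v set \<Rightarrow> 'e set \<Rightarrow> ('e \<Rightarrow> 'v) \<Rightarrow> bool" where
  "finite_degree V E og \<longleftrightarrow> gdeg V E og < \<infinity>"

definition adjacency :: "'e set \<Rightarrow> ('e \<Rightarrow> 'v) \<Rightarrow> ('e \<Rightarrow> 'e) \<Rightarrow> ('v \<times> 'v) set" where
  "adjacency E og rv = {(og e, og (rv e)) | e. e \<in> E}"

definition connected_graph :: "'v set \<Rightarrow> 'e set \<Rightarrow> ('e \<Rightarrow> 'v) \<Rightarrow> ('e \<Rightarrow> 'e) \<Rightarrow> bool" where
  "connected_graph V E og rv \<longleftrightarrow> graph V E og rv \<and> V \<noteq> {} \<and>
     (\<forall>u\<in>V. \<forall>v\<in>V. (u, v) \<in> (adjacency E og rv)\<^sup>*)"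

definition acts_by_automorphisms ::
  "('g,'m) monoid_scheme \<Rightarrow> 'v set \<Rightarrow> 'e set \<Rightarrow> ('e \<Rightarrow> 'v) \<Rightarrow> ('e \<Rightarrow> 'e)
   \<Rightarrow> ('g \<Rightarrow> 'v \<Rightarrow> 'v) \<Rightarrow> ('g \<Rightarrow> 'e \<Rightarrow> 'e) \<Rightarrow> bool" where
  "acts_by_automorphisms G V E og rv aV aE \<longleftrightarrow>
     (\<forall>g\<in>carrier G. bij_betw (aV g) V V \<and> bij_betw (aE g) E E \<and>
        (\<forall>e\<in>E. og (aE g e) = aV g (og e) \<and> rv (aE g e) = aE g (rv e))) \<and>
     (\<forall>v\<in>V. aV \<one>\<^bsub>G\<^esub> v = v) \<and> (\<forall>e\<in>E. aE \<one>\<^bsub>G\<^esub> e = e) \<and>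
     (\<forall>g\<in>carrier G. \<forall>h\<in>carrier G.
        (\<forall>v\<in>V. aV (g \<otimes>\<^bsub>G\<^esub> h) v = aV g (aV h v)) \<and>
        (\<forall>e\<in>E. aE (g \<otimes>\<^bsub>G\<^esub> h) e = aE g (aE h e)))"

definition vertex_transitive ::
  "('g,'m) monoid_scheme \<Rightarrow> 'v set \<Rightarrow> ('g \<Rightarrow> 'v \<Rightarrow> 'v) \<Rightarrow> bool" where
  "vertex_transitive G V aV \<longleftrightarrow> (\<forall>u\<in>V. \<forall>v\<in>V. \<exists>g\<in>carrier G. aV g u = v)"

definition stabilizer :: "('g,'m) monoid_scheme \<Rightarrow> ('g \<Rightarrow> 'v \<Rightarrow> 'v) \<Rightarrow> 'v \<Rightarrow> 'g set" where
  "stabilizer G aV v = {g\<in>carrier G. aV g v = v}"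

definition cayley_abels_graph ::
  "('g,'m) monoid_scheme \<Rightarrow> 'g topology \<Rightarrow> 'v set \<Rightarrow> 'e set \<Rightarrow> ('e \<Rightarrow> 'v) \<Rightarrow> ('e \<Rightarrow> 'e)
   \<Rightarrow> ('g \<Rightarrow> 'v \<Rightarrow> 'v) \<Rightarrow> ('g \<Rightarrow> 'e \<Rightarrow> 'e) \<Rightarrow> bool" where
  "cayley_abels_graph G T V E og rv aV aE \<longleftrightarrow>
     connected_graph V E og rv \<and> finite_degree V E og \<and>
     acts_by_automorphisms G V E og rv aV aE \<and> vertex_transitive G V aV \<and>
     (\<forall>v\<in>V. openin T (stabilizer G aV v) \<and> connected_by_compact G T (stabilizer G aV v))"

definition orbit :: "'g set \<Rightarrow> ('g \<Rightarrow> 'x \<Rightarrow> 'x) \<Rightarrow> 'x \<Rightarrow> 'x set" where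
  "orbit N a x = {a n x | n. n \<in> N}"

definition qV :: "'g set \<Rightarrow> 'v set \<Rightarrow> ('g \<Rightarrow> 'v \<Rightarrow> 'v) \<Rightarrow> 'v set set" where
  "qV N V aV = orbit N aV ` V"

definition qE :: "'g set \<Rightarrow> 'e set \<Rightarrow> ('g \<Rightarrow> 'e \<Rightarrow> 'e) \<Rightarrow> 'e set set" where
  "qE N E aE = orbit N aE ` E"

text \<open>o(Ne) = N o(e): for an orbit X = Ne this set equals N o(e).\<close>
definition qo :: "'g set \<Rightarrow> ('g \<Rightarrow> 'v \<Rightarrow> 'v) \<Rightarrow> ('e \<Rightarrow> 'v) \<Rightarrow> 'e set \<Rightarrow> 'v set" where
  "qo N aV og X = {aV n (og e) | n e. n \<in> N \<and> e \<in> X}"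

text \<open>reversal of Ne is N(reversed e), i.e. the image of the orbit under reversal.\<close>
definition qrv :: "('e \<Rightarrow> 'e) \<Rightarrow> 'e set \<Rightarrow> 'e set" where
  "qrv rv X = rv ` X"

definition qact :: "('g \<Rightarrow> 'x \<Rightarrow> 'x) \<Rightarrow> 'g set \<Rightarrow> 'x set \<Rightarrow> 'x set" where
  "qact a C X = {a g x | g x. g \<in> C \<and> x \<in> X}"

definition acts_freely_mod_kernel ::
  "'g set \<Rightarrow> 'v set \<Rightarrow> 'e set \<Rightarrow> ('g \<Rightarrow> 'v \<Rightarrow> 'v) \<Rightarrow> ('g \<Rightarrow> 'e \<Rightarrow> 'e) \<Rightarrow> bool" where
  "acts_freely_mod_kernel N V E aV aE \<longleftrightarrow>
     (\<forall>v\<in>V. \<forall>n\<in>N. aV n v = v \<longrightarrow> (\<forall>w\<in>V. aV n w = w) \<and> (\<forall>e\<in>E. aE n e = e))"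

end

theory Submission
  imports Defs
begin


lemma quot_istop:
  assumes "group G" "subgroup H G"
  shows "istopology (\<lambda>U. U \<subseteq> carrier (G Mod H) \<and> openin T (\<Union>U))"
  unfolding istopology_def
proof (rule conjI; intro allI impI)
  fix S U assume S: "S \<subseteq> carrier (G Mod H) \<and> openin T (\<Union>S)"
    and U: "U \<subseteq> carrier (G Mod H) \<and> openin T (\<Union>U)"
  have pd: "pairwise disjnt (rcosets\<^bsub>G\<^esub> H)" using group.rcos_disjoint[OF assms] .
  have "\<Union>(S \<inter> U) = \<Union>S \<inter> \<Union>U"
  proof
    show "\<Union>S \<inter> \<Union>U \<subseteq> \<Union>(S \<inter> U)"
    proof
      fix x assume "x \<in> \<Union>S \<inter> \<Union>U"
      then obtain A B where AB: "A \<in> S" "B \<in> U" "x \<in> A" "x \<in> B" by blast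
      have "A \<in> rcosets\<^bsub>G\<^esub> H" "B \<in> rcosets\<^bsub>G\<^esub> H" using AB S U by (auto simp: FactGroup_def)
      with pd AB have "A = B" unfolding pairwise_def disjnt_def by blast
      with AB show "x \<in> \<Union>(S \<inter> U)" by blast
    qed
  qed blast
  then show "S \<inter> U \<subseteq> carrier (G Mod H) \<and> openin T (\<Union>(S \<inter> U))" using S U by auto
next
  fix K assume K: "\<forall>k\<in>K. k \<subseteq> carrier (G Mod H) \<and> openin T (\<Union>k)"
  have "\<Union>(\<Union>K) = \<Union>(Union ` K)" by blast
  moreover have "openin T (\<Union>(Union ` K))" using K by (intro openin_Union) auto
  ultimately show "\<Union>K \<subseteq> carrier (G Mod H) \<and> openin T (\<Union>(\<Union>K))" using K by auto
qed

lemma openin_quot: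
  assumes "group G" "subgroup H G"
  shows "openin (quot_top G T H) U \<longleftrightarrow> U \<subseteq> rcosets\<^bsub>G\<^esub> H \<and> openin T (\<Union>U)"
  unfolding quot_top_def using quot_istop[OF assms, of T] by (simp add: FactGroup_def)

lemma topspace_quot:
  assumes "group G" "subgroup H G" "topspace T = carrier G"
  shows "topspace (quot_top G T H) = rcosets\<^bsub>G\<^esub> H"
proof -
  have "openin (quot_top G T H) (rcosets\<^bsub>G\<^esub> H)"
    using openin_quot[OF assms(1,2)] group.rcosets_part_G[OF assms(1,2)] assms(3)
    by (metis openin_topspace order_refl)
  moreover have "\<And>U. openin (quot_top G T H) U \<Longrightarrow> U \<subseteq> rcosets\<^bsub>G\<^esub> H"
    using openin_quot[OF assms(1,2)] by blast
  ultimately show ?thesis unfolding topspace_def by blast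
qed

lemma union_cosets:
  assumes "group G" "subgroup H G"
  shows "\<Union>{C \<in> rcosets\<^bsub>G\<^esub> H. P C} = {x \<in> carrier G. P (H #>\<^bsub>G\<^esub> x)}"
proof
  show "\<Union>{C \<in> rcosets\<^bsub>G\<^esub> H. P C} \<subseteq> {x \<in> carrier G. P (H #>\<^bsub>G\<^esub> x)}"
  proof
    fix x assume "x \<in> \<Union>{C \<in> rcosets\<^bsub>G\<^esub> H. P C}"
    then obtain g where g: "g \<in> carrier G" "x \<in> H #>\<^bsub>G\<^esub> g" "P (H #>\<^bsub>G\<^esub> g)"
      unfolding RCOSETS_def by blast
    have "H #>\<^bsub>G\<^esub> g = H #>\<^bsub>G\<^esub> x" using group.repr_independence[OF assms(1) g(2,1) assms(2)] .
    moreover have "x \<in> carrier G" using g subgroup.elemrcos_carrier[OF assms(2,1)] by blast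
    ultimately show "x \<in> {x \<in> carrier G. P (H #>\<^bsub>G\<^esub> x)}" using g by auto
  qed
next
  show "{x \<in> carrier G. P (H #>\<^bsub>G\<^esub> x)} \<subseteq> \<Union>{C \<in> rcosets\<^bsub>G\<^esub> H. P C}"
    using group.rcos_self[OF assms(1) _ assms(2)] group.rcosetsI[OF assms(1) subgroup.subset[OF assms(2)]]
    by blast
qed

lemma cont_proj:
  assumes "group G" "subgroup H G" "topspace T = carrier G"
  shows "continuous_map T (quot_top G T H) (\<lambda>g. H #>\<^bsub>G\<^esub> g)"
  unfolding continuous_map_def
proof (intro conjI allI impI)
  show "(\<lambda>g. H #>\<^bsub>G\<^esub> g) \<in> topspace T \<rightarrow> topspace (quot_top G T H)"
    using topspace_quot[OF assms] assms(3) group.rcosetsI[OF assms(1) subgroup.subset[OF assms(2)]] by auto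
  fix U assume "openin (quot_top G T H) U"
  then have U: "U \<subseteq> rcosets\<^bsub>G\<^esub> H" "openin T (\<Union>U)" using openin_quot[OF assms(1,2)] by auto
  have "\<Union>U = \<Union>{C \<in> rcosets\<^bsub>G\<^esub> H. C \<in> U}" using U by blast
  also have "\<dots> = {x \<in> topspace T. H #>\<^bsub>G\<^esub> x \<in> U}" using union_cosets[OF assms(1,2)] assms(3) by simp
  finally show "openin T {x \<in> topspace T. H #>\<^bsub>G\<^esub> x \<in> U}" using U by simp
qed

lemma cont_quot_univ:
  assumes "group G" "subgroup H G" "topspace T = carrier G"
    and h: "continuous_map T S h" and wd: "\<And>g x. g \<in> carrier G \<Longrightarrow> x \<in> H #>\<^bsub>G\<^esub> g \<Longrightarrow> h x = h g"
  shows "continuous_map (quot_top G T H) S (\<lambda>C. h (SOME x. x \<in> C))"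
    and "\<And>g. g \<in> carrier G \<Longrightarrow> h (SOME x. x \<in> H #>\<^bsub>G\<^esub> g) = h g"
proof -
  show ev: "\<And>g. g \<in> carrier G \<Longrightarrow> h (SOME x. x \<in> H #>\<^bsub>G\<^esub> g) = h g"
    using wd group.rcos_self[OF assms(1) _ assms(2)] by (metis someI)
  show "continuous_map (quot_top G T H) S (\<lambda>C. h (SOME x. x \<in> C))"
    unfolding continuous_map_def
  proof (intro conjI allI impI)
    show "(\<lambda>C. h (SOME x. x \<in> C)) \<in> topspace (quot_top G T H) \<rightarrow> topspace S"
    proof
      fix C assume "C \<in> topspace (quot_top G T H)"
      then obtain g where g: "g \<in> carrier G" "C = H #>\<^bsub>G\<^esub> g"
        using topspace_quot[OF assms(1-3)] unfolding RCOSETS_def by auto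
      then show "h (SOME x. x \<in> C) \<in> topspace S" using ev h assms(3)
        by (metis continuous_map_def PiE)
    qed
    fix U assume U: "openin S U"
    have "{C \<in> topspace (quot_top G T H). h (SOME x. x \<in> C) \<in> U}
          = {C \<in> rcosets\<^bsub>G\<^esub> H. h (SOME x. x \<in> C) \<in> U}" using topspace_quot[OF assms(1-3)] by simp
    moreover have "\<Union>{C \<in> rcosets\<^bsub>G\<^esub> H. h (SOME x. x \<in> C) \<in> U} = {x \<in> topspace T. h x \<in> U}"
      using union_cosets[OF assms(1,2), of "\<lambda>C. h (SOME x. x \<in> C) \<in> U"] ev assms(3) by auto
    moreover have "openin T {x \<in> topspace T. h x \<in> U}" using h U openin_continuous_map_preimage by blast
    ultimately show "openin (quot_top G T H) {C \<in> topspace (quot_top G T H). h (SOME x. x \<in> C) \<in> U}"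
      using openin_quot[OF assms(1,2)] by auto
  qed
qed

lemma comp_subgroup:
  assumes "group Q" "topspace \<tau> = carrier Q"
    and L: "\<And>c. c \<in> carrier Q \<Longrightarrow> continuous_map \<tau> \<tau> (\<lambda>x. c \<otimes>\<^bsub>Q\<^esub> x)"
    and I: "continuous_map \<tau> \<tau> (\<lambda>x. inv\<^bsub>Q\<^esub> x)"
  shows "subgroup (connected_component_of_set \<tau> \<one>\<^bsub>Q\<^esub>) Q"
proof -
  interpret group Q by fact
  let ?K = "connected_component_of_set \<tau> \<one>\<^bsub>Q\<^esub>"
  have Ksub: "?K \<subseteq> carrier Q" using connected_component_of_subset_topspace assms(2) by metis
  have Kc: "connectedin \<tau> ?K" by (rule connectedin_connected_component_of)
  have one: "\<one>\<^bsub>Q\<^esub> \<in> ?K" using connected_component_of_refl assms(2) by fastforce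
  show ?thesis
  proof
    show "?K \<subseteq> carrier Q" by fact
    show "\<one>\<^bsub>Q\<^esub> \<in> ?K" by fact
  next
    fix c d assume c: "c \<in> ?K" and d: "d \<in> ?K"
    have cQ: "c \<in> carrier Q" using c Ksub by blast
    have "connectedin \<tau> ((\<lambda>x. c \<otimes>\<^bsub>Q\<^esub> x) ` ?K)"
      using connectedin_continuous_map_image[OF L[OF cQ] Kc] .
    moreover have "c \<in> (\<lambda>x. c \<otimes>\<^bsub>Q\<^esub> x) ` ?K" using one cQ by force
    ultimately have "(\<lambda>x. c \<otimes>\<^bsub>Q\<^esub> x) ` ?K \<subseteq> connected_component_of_set \<tau> c"
      by (rule connected_component_of_maximal)
    moreover have "connected_component_of_set \<tau> c = ?K"
      using c connected_component_of_equiv by (metis mem_Collect_eq)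
    ultimately show "c \<otimes>\<^bsub>Q\<^esub> d \<in> ?K" using d by blast
  next
    fix c assume c: "c \<in> ?K"
    have "connectedin \<tau> ((\<lambda>x. inv\<^bsub>Q\<^esub> x) ` ?K)"
      using connectedin_continuous_map_image[OF I Kc] .
    moreover have "\<one>\<^bsub>Q\<^esub> \<in> (\<lambda>x. inv\<^bsub>Q\<^esub> x) ` ?K" using one by force
    ultimately have "(\<lambda>x. inv\<^bsub>Q\<^esub> x) ` ?K \<subseteq> ?K"
      by (rule connected_component_of_maximal)
    then show "inv\<^bsub>Q\<^esub> c \<in> ?K" using c by blast
  qed
qed

lemma tg_left:
  assumes "topological_group G T" "a \<in> carrier G"
  shows "continuous_map T T (\<lambda>x. a \<otimes>\<^bsub>G\<^esub> x)"
proof -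
  have m: "continuous_map (prod_topology T T) T (\<lambda>(x,y). x \<otimes>\<^bsub>G\<^esub> y)" and ts: "topspace T = carrier G"
    using assms(1) unfolding topological_group_def by auto
  have "continuous_map T (prod_topology T T) (\<lambda>x. (a, x))"
    by (intro continuous_map_pairedI continuous_map_const[THEN iffD2] continuous_map_id) (use ts assms(2) in auto)
  from continuous_map_compose[OF this m] show ?thesis by (simp add: o_def)
qed

lemma tg_lcoset_open:
  assumes "topological_group G T" "a \<in> carrier G" "openin T S"
  shows "openin T (a <#\<^bsub>G\<^esub> S)"
proof -
  have g: "group G" and ts: "topspace T = carrier G" using assms(1) unfolding topological_group_def by auto
  interpret group G by fact
  have Ssub: "S \<subseteq> carrier G" using openin_subset[OF assms(3)] ts by simp
  have "a <#\<^bsub>G\<^esub> S = {x \<in> topspace T. inv\<^bsub>G\<^esub> a \<otimes>\<^bsub>G\<^esub> x \<in> S}"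
  proof
    show "a <#\<^bsub>G\<^esub> S \<subseteq> {x \<in> topspace T. inv\<^bsub>G\<^esub> a \<otimes>\<^bsub>G\<^esub> x \<in> S}"
      using Ssub assms(2) ts by (auto simp: l_coset_def m_assoc[symmetric])
    show "{x \<in> topspace T. inv\<^bsub>G\<^esub> a \<otimes>\<^bsub>G\<^esub> x \<in> S} \<subseteq> a <#\<^bsub>G\<^esub> S"
    proof
      fix x assume x: "x \<in> {x \<in> topspace T. inv\<^bsub>G\<^esub> a \<otimes>\<^bsub>G\<^esub> x \<in> S}"
      then have "x = a \<otimes>\<^bsub>G\<^esub> (inv\<^bsub>G\<^esub> a \<otimes>\<^bsub>G\<^esub> x)" using ts assms(2) by (simp add: m_assoc[symmetric])
      then show "x \<in> a <#\<^bsub>G\<^esub> S" using x unfolding l_coset_def by blast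
    qed
  qed
  moreover have "openin T {x \<in> topspace T. inv\<^bsub>G\<^esub> a \<otimes>\<^bsub>G\<^esub> x \<in> S}"
    using openin_continuous_map_preimage[OF tg_left[OF assms(1)] assms(3)] assms(2) by simp
  ultimately show ?thesis by simp
qed

lemma tg_open_right_closed:
  assumes "topological_group G T" "openin T H" "\<one>\<^bsub>G\<^esub> \<in> H"
    and "S \<subseteq> carrier G" "\<And>x t. x \<in> S \<Longrightarrow> t \<in> H \<Longrightarrow> x \<otimes>\<^bsub>G\<^esub> t \<in> S"
  shows "openin T S"
proof -
  have g: "group G" and ts: "topspace T = carrier G" using assms(1) unfolding topological_group_def by auto
  interpret group G by fact
  have Hs: "H \<subseteq> carrier G" using openin_subset[OF assms(2)] ts by simp
  have "S = \<Union>((\<lambda>x. x <#\<^bsub>G\<^esub> H) ` S)"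
  proof
    show "S \<subseteq> \<Union>((\<lambda>x. x <#\<^bsub>G\<^esub> H) ` S)"
    proof
      fix x assume "x \<in> S"
      then have "x \<in> x <#\<^bsub>G\<^esub> H" using assms(3,4) unfolding l_coset_def by (force intro: bexI[of _ "\<one>\<^bsub>G\<^esub>"])
      then show "x \<in> \<Union>((\<lambda>x. x <#\<^bsub>G\<^esub> H) ` S)" using \<open>x \<in> S\<close> by blast
    qed
    show "\<Union>((\<lambda>x. x <#\<^bsub>G\<^esub> H) ` S) \<subseteq> S" using assms(5) unfolding l_coset_def by blast
  qed
  moreover have "openin T (\<Union>((\<lambda>x. x <#\<^bsub>G\<^esub> H) ` S))"
    using tg_lcoset_open[OF assms(1) _ assms(2)] assms(4) by (intro openin_Union) blast
  ultimately show ?thesis by simp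
qed




locale nact = normal N G for N and G :: "('g,'m) monoid_scheme" (structure) +
  fixes X :: "'x set" and a :: "'g \<Rightarrow> 'x \<Rightarrow> 'x"
  assumes a_cl: "g \<in> carrier G \<Longrightarrow> x \<in> X \<Longrightarrow> a g x \<in> X"
    and a_one: "x \<in> X \<Longrightarrow> a \<one> x = x"
    and a_mult: "g \<in> carrier G \<Longrightarrow> h \<in> carrier G \<Longrightarrow> x \<in> X \<Longrightarrow> a (g \<otimes> h) x = a g (a h x)"
begin

lemma sgN: "subgroup N G" by (rule subgroup_axioms)

lemma N_mult: "n \<in> N \<Longrightarrow> m \<in> N \<Longrightarrow> n \<otimes> m \<in> N"
  using subgroup.m_closed[OF sgN] by blast

lemma N_inv: "n \<in> N \<Longrightarrow> inv n \<in> N"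
  using subgroup.m_inv_closed[OF sgN] by blast

lemma N_carr: "n \<in> N \<Longrightarrow> n \<in> carrier G"
  using subgroup.mem_carrier[OF sgN] by blast

lemma N_sub: "N \<subseteq> carrier G" using N_carr by blast

lemma N_one: "\<one> \<in> N" using subgroup.one_closed[OF sgN] .

lemma orb_sub: "x \<in> X \<Longrightarrow> orbit N a x \<subseteq> X"
  unfolding orbit_def using a_cl N_carr by blast

lemma orb_mem: "n \<in> N \<Longrightarrow> a n x \<in> orbit N a x"
  unfolding orbit_def by blast

lemma orb_self: "x \<in> X \<Longrightarrow> x \<in> orbit N a x"
  using orb_mem[OF N_one, of x] a_one by simp

lemma orb_trans:
  assumes "x \<in> X" "y \<in> orbit N a x" shows "orbit N a y = orbit N a x"
proof -
  obtain m where m: "m \<in> N" "y = a m x" using assms unfolding orbit_def by blast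
  show ?thesis
  proof
    show "orbit N a y \<subseteq> orbit N a x"
    proof
      fix z assume "z \<in> orbit N a y"
      then obtain n where n: "n \<in> N" "z = a n y" unfolding orbit_def by blast
      then have "z = a (n \<otimes> m) x" using m assms a_mult N_carr by auto
      then show "z \<in> orbit N a x" using n m orb_mem N_mult by auto
    qed
    show "orbit N a x \<subseteq> orbit N a y"
    proof
      fix z assume "z \<in> orbit N a x"
      then obtain n where n: "n \<in> N" "z = a n x" unfolding orbit_def by blast
      have "a (n \<otimes> inv m) y = a n x" using m n assms N_carr
        by (simp add: a_mult[symmetric] m_assoc)
      then show "z \<in> orbit N a y" using n m orb_mem N_mult N_inv by metis
    qed
  qed
qed

lemma orb_eq_iff:
  assumes "x \<in> X" "y \<in> X" shows "orbit N a y = orbit N a x \<longleftrightarrow> y \<in> orbit N a x"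
  using orb_trans orb_self assms by blast

lemma act_orb:
  assumes g: "g \<in> carrier G" and x: "x \<in> X"
  shows "qact a (N #> g) (orbit N a x) = orbit N a (a g x)"
proof
  show "qact a (N #> g) (orbit N a x) \<subseteq> orbit N a (a g x)"
  proof
    fix z assume "z \<in> qact a (N #> g) (orbit N a x)"
    then obtain n m where nm: "n \<in> N" "m \<in> N" "z = a (n \<otimes> g) (a m x)"
      unfolding qact_def orbit_def r_coset_def by blast
    have c: "g \<otimes> m \<otimes> inv g \<in> N" using inv_op_closed2 g nm by blast
    have "z = a (n \<otimes> (g \<otimes> m \<otimes> inv g)) (a g x)"
      using nm g x N_carr by (simp add: a_mult[symmetric] m_assoc)
    then show "z \<in> orbit N a (a g x)" using c nm orb_mem N_mult by auto
  qed
  show "orbit N a (a g x) \<subseteq> qact a (N #> g) (orbit N a x)"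
  proof
    fix z assume "z \<in> orbit N a (a g x)"
    then obtain n where n: "n \<in> N" "z = a n (a g x)" unfolding orbit_def by blast
    have "z = a (n \<otimes> g) x" using n g x N_carr by (simp add: a_mult)
    moreover have "n \<otimes> g \<in> N #> g" using n unfolding r_coset_def by blast
    ultimately show "z \<in> qact a (N #> g) (orbit N a x)"
      unfolding qact_def using orb_self[OF x] by blast
  qed
qed

lemma qact_one: "x \<in> X \<Longrightarrow> qact a N (orbit N a x) = orbit N a x"
  using act_orb[of \<one> x] a_one coset_mult_one[OF N_sub] by simp

lemma qact_mult:
  assumes "C \<subseteq> carrier G" "D \<subseteq> carrier G" "Y \<subseteq> X"
  shows "qact a (C <#> D) Y = qact a C (qact a D Y)"
proof
  show "qact a (C <#> D) Y \<subseteq> qact a C (qact a D Y)"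
  proof
    fix z assume "z \<in> qact a (C <#> D) Y"
    then obtain c d y where cdy: "c \<in> C" "d \<in> D" "y \<in> Y" "z = a (c \<otimes> d) y"
      unfolding qact_def set_mult_def by blast
    then have e: "z = a c (a d y)" using assms a_mult[of c d y] by blast
    have "a d y \<in> qact a D Y" using cdy unfolding qact_def by blast
    then show "z \<in> qact a C (qact a D Y)" using e cdy(1) unfolding qact_def by blast
  qed
  show "qact a C (qact a D Y) \<subseteq> qact a (C <#> D) Y"
  proof
    fix z assume "z \<in> qact a C (qact a D Y)"
    then obtain c d y where cdy: "c \<in> C" "d \<in> D" "y \<in> Y" "z = a c (a d y)"
      unfolding qact_def by blast
    have "c \<in> carrier G" "d \<in> carrier G" "y \<in> X" using cdy assms by auto
    then have e: "z = a (c \<otimes> d) y" using cdy(4) a_mult[of c d y] by simp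
    have "c \<otimes> d \<in> C <#> D" using cdy unfolding set_mult_def by blast
    then show "z \<in> qact a (C <#> D) Y" using e cdy(3) unfolding qact_def by blast
  qed
qed

lemma inv_act: "g \<in> carrier G \<Longrightarrow> x \<in> X \<Longrightarrow> a (inv g) (a g x) = x"
  by (metis a_mult a_one inv_closed l_inv)

lemma act_inv: "g \<in> carrier G \<Longrightarrow> x \<in> X \<Longrightarrow> a g (a (inv g) x) = x"
  by (metis a_mult a_one inv_closed r_inv)

lemma qact_bij:
  assumes g: "g \<in> carrier G"
  shows "bij_betw (qact a (N #> g)) (orbit N a ` X) (orbit N a ` X)"
proof (rule bij_betw_byWitness[where f'="qact a (N #> inv g)"])
  have gi: "inv g \<in> carrier G" using g by simp
  show "\<forall>Y\<in>orbit N a ` X. qact a (N #> inv g) (qact a (N #> g) Y) = Y"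
  proof
    fix Y assume "Y \<in> orbit N a ` X"
    then obtain x where x: "x \<in> X" "Y = orbit N a x" by blast
    show "qact a (N #> inv g) (qact a (N #> g) Y) = Y"
      using x act_orb[OF g x(1)] act_orb[OF gi a_cl[OF g x(1)]] inv_act[OF g x(1)] by simp
  qed
  show "\<forall>Y\<in>orbit N a ` X. qact a (N #> g) (qact a (N #> inv g) Y) = Y"
  proof
    fix Y assume "Y \<in> orbit N a ` X"
    then obtain x where x: "x \<in> X" "Y = orbit N a x" by blast
    show "qact a (N #> g) (qact a (N #> inv g) Y) = Y"
      using x act_orb[OF gi x(1)] act_orb[OF g a_cl[OF gi x(1)]] act_inv[OF g x(1)] by simp
  qed
  show "qact a (N #> g) ` orbit N a ` X \<subseteq> orbit N a ` X"
  proof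
    fix Z assume "Z \<in> qact a (N #> g) ` orbit N a ` X"
    then obtain x where x: "x \<in> X" "Z = qact a (N #> g) (orbit N a x)" by blast
    then show "Z \<in> orbit N a ` X" using act_orb[OF g x(1)] a_cl[OF g x(1)] by simp
  qed
  show "qact a (N #> inv g) ` orbit N a ` X \<subseteq> orbit N a ` X"
  proof
    fix Z assume "Z \<in> qact a (N #> inv g) ` orbit N a ` X"
    then obtain x where x: "x \<in> X" "Z = qact a (N #> inv g) (orbit N a x)" by blast
    then show "Z \<in> orbit N a ` X" using act_orb[OF gi x(1)] a_cl[OF gi x(1)] by simp
  qed
qed

end




lemma (in group) conj_back:
  assumes "g \<in> carrier G" "n \<in> carrier G"
  shows "g \<otimes> (inv g \<otimes> n \<otimes> g) \<otimes> inv g = n"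
proof -
  have "g \<otimes> (inv g \<otimes> n) = n" using assms by (simp add: m_assoc[symmetric])
  then show ?thesis using assms by (simp add: m_assoc)
qed

locale mset =
  fixes G :: "('g,'m) monoid_scheme" (structure) and T :: "'g topology" and N :: "'g set"
    and V :: "'v set" and E :: "'e set" and og :: "'e \<Rightarrow> 'v" and rv :: "'e \<Rightarrow> 'e"
    and aV :: "'g \<Rightarrow> 'v \<Rightarrow> 'v" and aE :: "'g \<Rightarrow> 'e \<Rightarrow> 'e"
  assumes tg: "topological_group G T"
    and nN: "normal N G"
    and cg: "connected_graph V E og rv" and fd: "finite_degree V E og"
    and ab: "acts_by_automorphisms G V E og rv aV aE" and vt: "vertex_transitive G V aV"
begin

lemma grp: "group G" using tg unfolding topological_group_def by simp

lemma ab_cl: "g \<in> carrier G \<Longrightarrow> v \<in> V \<Longrightarrow> aV g v \<in> V" "g \<in> carrier G \<Longrightarrow> e \<in> E \<Longrightarrow> aE g e \<in> E"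
  using ab unfolding acts_by_automorphisms_def bij_betw_def by blast+

lemma ab_og: "g \<in> carrier G \<Longrightarrow> e \<in> E \<Longrightarrow> og (aE g e) = aV g (og e)"
  and ab_rv: "g \<in> carrier G \<Longrightarrow> e \<in> E \<Longrightarrow> rv (aE g e) = aE g (rv e)"
  using ab unfolding acts_by_automorphisms_def by blast+

lemma ab_inj: "g \<in> carrier G \<Longrightarrow> inj_on (aE g) E"
  using ab unfolding acts_by_automorphisms_def bij_betw_def by blast

lemma gr: "e \<in> E \<Longrightarrow> og e \<in> V" "e \<in> E \<Longrightarrow> rv e \<in> E" "e \<in> E \<Longrightarrow> rv (rv e) = e"
  using cg unfolding connected_graph_def graph_def by blast+

lemma Vne: "V \<noteq> {}" using cg unfolding connected_graph_def by blast

lemma conn: "u \<in> V \<Longrightarrow> v \<in> V \<Longrightarrow> (u, v) \<in> (adjacency E og rv)\<^sup>*"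
  using cg unfolding connected_graph_def by blast

sublocale NV: nact N G V aV
  by (rule nact.intro[OF nN], unfold_locales) (use ab ab_cl in \<open>auto simp: acts_by_automorphisms_def\<close>)

sublocale NE: nact N G E aE
  by (rule nact.intro[OF nN], unfold_locales) (use ab ab_cl in \<open>auto simp: acts_by_automorphisms_def\<close>)

lemma qo_orb:
  assumes e: "e \<in> E" shows "qo N aV og (orbit N aE e) = orbit N aV (og e)"
proof
  show "qo N aV og (orbit N aE e) \<subseteq> orbit N aV (og e)"
  proof
    fix z assume "z \<in> qo N aV og (orbit N aE e)"
    then obtain n e' where ne: "n \<in> N" "e' \<in> orbit N aE e" "z = aV n (og e')"
      unfolding qo_def by blast
    then obtain m where m: "m \<in> N" "e' = aE m e" unfolding orbit_def by blast
    have "z = aV (n \<otimes> m) (og e)" using ne m e ab_og NV.N_carr gr NV.a_mult by simp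
    then show "z \<in> orbit N aV (og e)" using NV.orb_mem NV.N_mult ne m by simp
  qed
  show "orbit N aV (og e) \<subseteq> qo N aV og (orbit N aE e)"
    using NE.orb_self[OF e] unfolding qo_def orbit_def by blast
qed

lemma qrv_orb:
  assumes e: "e \<in> E" shows "qrv rv (orbit N aE e) = orbit N aE (rv e)"
proof -
  have r: "\<And>n. n \<in> N \<Longrightarrow> rv (aE n e) = aE n (rv e)" using ab_rv NV.N_carr e by blast
  show ?thesis unfolding qrv_def orbit_def
  proof
    show "rv ` {aE n e |n. n \<in> N} \<subseteq> {aE n (rv e) |n. n \<in> N}" using r by blast
    show "{aE n (rv e) |n. n \<in> N} \<subseteq> rv ` {aE n e |n. n \<in> N}"
    proof
      fix z assume "z \<in> {aE n (rv e) |n. n \<in> N}"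
      then obtain n where "n \<in> N" "z = aE n (rv e)" by blast
      then show "z \<in> rv ` {aE n e |n. n \<in> N}" using r by (metis (mono_tags, lifting) image_eqI mem_Collect_eq)
    qed
  qed
qed

lemma qE_eq: "qE N E aE = orbit N aE ` E" by (simp add: qE_def)
lemma qV_eq: "qV N V aV = orbit N aV ` V" by (simp add: qV_def)

lemma q_graph: "graph (qV N V aV) (qE N E aE) (qo N aV og) (qrv rv)"
  unfolding graph_def qE_eq qV_eq
  using qo_orb qrv_orb gr by auto

lemma q_adj: "e \<in> E \<Longrightarrow> (orbit N aV (og e), orbit N aV (og (rv e))) \<in> adjacency (qE N E aE) (qo N aV og) (qrv rv)"
  unfolding adjacency_def qE_eq
  by (rule CollectI, rule exI[of _ "orbit N aE e"]) (simp add: qo_orb qrv_orb gr)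

lemma q_conn_aux:
  assumes "(u, v) \<in> (adjacency E og rv)\<^sup>*"
  shows "(orbit N aV u, orbit N aV v) \<in> (adjacency (qE N E aE) (qo N aV og) (qrv rv))\<^sup>*"
  using assms
proof (induction rule: rtrancl_induct)
  case base then show ?case by simp
next
  case (step y z)
  then obtain e where "e \<in> E" "y = og e" "z = og (rv e)" unfolding adjacency_def by blast
  with q_adj step.IH show ?case by (meson rtrancl.rtrancl_into_rtrancl)
qed

lemma q_connected: "connected_graph (qV N V aV) (qE N E aE) (qo N aV og) (qrv rv)"
  unfolding connected_graph_def
  using q_graph Vne q_conn_aux conn by (auto simp: qV_eq)

definition Ev :: "'v \<Rightarrow> 'e set" where "Ev v = {e \<in> E. og e = v}"

lemma qEv:
  assumes v: "v \<in> V"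
  shows "{X \<in> qE N E aE. qo N aV og X = orbit N aV v} = orbit N aE ` Ev v"
proof
  show "{X \<in> qE N E aE. qo N aV og X = orbit N aV v} \<subseteq> orbit N aE ` Ev v"
  proof
    fix X assume "X \<in> {X \<in> qE N E aE. qo N aV og X = orbit N aV v}"
    then obtain e where e: "e \<in> E" "X = orbit N aE e" "orbit N aV (og e) = orbit N aV v"
      by (auto simp: qE_eq qo_orb)
    then have "og e \<in> orbit N aV v" using NV.orb_self gr by blast
    then obtain n where n: "n \<in> N" "og e = aV n v" unfolding orbit_def by blast
    define e' where "e' = aE (inv n) e"
    have ni: "inv n \<in> N" using NV.N_inv n by blast
    have e'E: "e' \<in> E" using e'_def ab_cl ni NV.N_carr e by blast
    have "og e' = v" using e'_def ab_og[OF NV.N_carr[OF ni] e(1)] n NV.inv_act[OF NV.N_carr[OF n(1)] v] by simp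
    moreover have "orbit N aE e' = X" using NE.orb_trans[OF e(1)] NE.orb_mem[OF ni] e'_def e by simp
    ultimately show "X \<in> orbit N aE ` Ev v" using e'E unfolding Ev_def by blast
  qed
  show "orbit N aE ` Ev v \<subseteq> {X \<in> qE N E aE. qo N aV og X = orbit N aV v}"
  proof
    fix X assume "X \<in> orbit N aE ` Ev v"
    then obtain e where e: "e \<in> E" "og e = v" "X = orbit N aE e" unfolding Ev_def by blast
    then have "X \<in> qE N E aE" by (simp add: qE_eq)
    moreover have "qo N aV og X = orbit N aV v" using e qo_orb by simp
    ultimately show "X \<in> {X \<in> qE N E aE. qo N aV og X = orbit N aV v}" by blast
  qed
qed

lemma vdeg_Ev: "vdeg E og v = (if finite (Ev v) then enat (card (Ev v)) else \<infinity>)"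
  by (simp add: vdeg_def Ev_def)

lemma qvdeg: "v \<in> V \<Longrightarrow> vdeg (qE N E aE) (qo N aV og) (orbit N aV v)
   = (if finite (orbit N aE ` Ev v) then enat (card (orbit N aE ` Ev v)) else \<infinity>)"
  unfolding vdeg_def using qEv by simp

lemma vdeg_le_gdeg: "v \<in> V \<Longrightarrow> vdeg E og v \<le> gdeg V E og"
  unfolding gdeg_def by (rule SUP_upper)

lemma Ev_fin: "v \<in> V \<Longrightarrow> finite (Ev v)"
proof -
  assume v: "v \<in> V"
  have "vdeg E og v < \<infinity>" using vdeg_le_gdeg[OF v] fd unfolding finite_degree_def
    by (rule order_le_less_trans)
  then show ?thesis unfolding vdeg_Ev by (auto split: if_splits)
qed

lemma qvdeg_le: "v \<in> V \<Longrightarrow> vdeg (qE N E aE) (qo N aV og) (orbit N aV v) \<le> vdeg E og v"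
proof -
  assume v: "v \<in> V"
  have f: "finite (Ev v)" using Ev_fin[OF v] .
  show ?thesis using qvdeg[OF v] vdeg_Ev[of v] f by (simp add: card_image_le)
qed

lemma qgdeg: "gdeg (qV N V aV) (qE N E aE) (qo N aV og) = (SUP v\<in>V. vdeg (qE N E aE) (qo N aV og) (orbit N aV v))"
  unfolding gdeg_def qV_eq by (simp add: image_image)

lemma qgdeg_le: "gdeg (qV N V aV) (qE N E aE) (qo N aV og) \<le> gdeg V E og"
  unfolding qgdeg unfolding gdeg_def by (rule SUP_subset_mono) (auto simp: qvdeg_le)

lemma Ev_act: "g \<in> carrier G \<Longrightarrow> v \<in> V \<Longrightarrow> Ev (aV g v) = aE g ` Ev v"
proof
  assume g: "g \<in> carrier G" and v: "v \<in> V"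
  show "aE g ` Ev v \<subseteq> Ev (aV g v)" using g ab_og ab_cl unfolding Ev_def by auto
  show "Ev (aV g v) \<subseteq> aE g ` Ev v"
  proof
    fix e assume e: "e \<in> Ev (aV g v)"
    have gi: "inv g \<in> carrier G" using g grp by simp
    have "aE (inv g) e \<in> Ev v" using e g gi ab_og ab_cl NV.inv_act v unfolding Ev_def by auto
    moreover have "aE g (aE (inv g) e) = e" using NE.act_inv g e unfolding Ev_def by auto
    ultimately show "e \<in> aE g ` Ev v" by (metis imageI)
  qed
qed

lemma vdeg_act: "g \<in> carrier G \<Longrightarrow> v \<in> V \<Longrightarrow> vdeg E og (aV g v) = vdeg E og v"
proof -
  assume g: "g \<in> carrier G" and v: "v \<in> V"
  have "inj_on (aE g) (Ev v)" using ab_inj[OF g] unfolding Ev_def by (rule inj_on_subset) auto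
  then show ?thesis unfolding vdeg_Ev using Ev_act[OF g v] by (simp add: card_image finite_image_iff)
qed

lemma vdeg_const: "u \<in> V \<Longrightarrow> v \<in> V \<Longrightarrow> vdeg E og u = vdeg E og v"
  using vt vdeg_act unfolding vertex_transitive_def by metis

definition Pv :: "'v \<Rightarrow> bool" where
  "Pv v \<longleftrightarrow> (\<forall>n\<in>N. aV n v = v \<longrightarrow> (\<forall>e\<in>Ev v. aE n e = e))"

lemma inj_Pv:
  assumes v: "v \<in> V" shows "inj_on (orbit N aE) (Ev v) \<longleftrightarrow> Pv v"
proof
  assume inj: "inj_on (orbit N aE) (Ev v)"
  show "Pv v" unfolding Pv_def
  proof (intro ballI impI)
    fix n e assume n: "n \<in> N" "aV n v = v" and e: "e \<in> Ev v"
    have eE: "e \<in> E" "og e = v" using e unfolding Ev_def by auto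
    have "aE n e \<in> E" using ab_cl NV.N_carr n eE by blast
    moreover have "og (aE n e) = v" using ab_og[OF NV.N_carr[OF n(1)] eE(1)] eE n by simp
    ultimately have e': "aE n e \<in> Ev v" unfolding Ev_def by blast
    have "orbit N aE (aE n e) = orbit N aE e" using NE.orb_trans[OF eE(1) NE.orb_mem[OF n(1)]] .
    then show "aE n e = e" using inj e e' unfolding inj_on_def by blast
  qed
next
  assume P: "Pv v"
  show "inj_on (orbit N aE) (Ev v)"
  proof (rule inj_onI)
    fix e1 e2 assume e1: "e1 \<in> Ev v" and e2: "e2 \<in> Ev v" and eq: "orbit N aE e1 = orbit N aE e2"
    have E1: "e1 \<in> E" "og e1 = v" and E2: "e2 \<in> E" "og e2 = v" using e1 e2 unfolding Ev_def by auto
    have "e1 \<in> orbit N aE e2" using eq NE.orb_self[OF E1(1)] by simp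
    then obtain n where n: "n \<in> N" "e1 = aE n e2" unfolding orbit_def by blast
    have "aV n v = v" using ab_og[OF NV.N_carr[OF n(1)] E2(1)] n E1 E2 by simp
    then have "aE n e2 = e2" using P n e2 unfolding Pv_def by blast
    then show "e1 = e2" using n by simp
  qed
qed

lemma qvdeg_eq:
  assumes v: "v \<in> V"
  shows "vdeg (qE N E aE) (qo N aV og) (orbit N aV v) = vdeg E og v \<longleftrightarrow> Pv v"
proof -
  have f: "finite (Ev v)" using Ev_fin[OF v] .
  have "vdeg (qE N E aE) (qo N aV og) (orbit N aV v) = vdeg E og v \<longleftrightarrow> card (orbit N aE ` Ev v) = card (Ev v)"
    using qvdeg[OF v] vdeg_Ev[of v] f by simp
  also have "\<dots> \<longleftrightarrow> inj_on (orbit N aE) (Ev v)"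
    using f card_image eq_card_imp_inj_on by metis
  finally show ?thesis using inj_Pv[OF v] by simp
qed

lemma Pv_trans:
  assumes P0: "Pv v0" and v0: "v0 \<in> V" and v: "v \<in> V"
  shows "Pv v"
proof -
  obtain g where g: "g \<in> carrier G" "aV g v0 = v" using vt v0 v unfolding vertex_transitive_def by blast
  have gi: "inv g \<in> carrier G" using g grp by simp
  show ?thesis unfolding Pv_def
  proof (intro ballI impI)
    fix n e assume n: "n \<in> N" "aV n v = v" and e: "e \<in> Ev v"
    have nc: "n \<in> carrier G" using NV.N_carr n by blast
    define m where "m = inv g \<otimes> n \<otimes> g"
    have mN: "m \<in> N" unfolding m_def using NV.inv_op_closed1 g n by blast
    have mc: "m \<in> carrier G" using NV.N_carr mN by blast
    have "aV m v0 = aV (inv g) (aV n (aV g v0))"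
      unfolding m_def using g gi nc v0 v ab_cl by (simp add: NV.a_mult)
    then have mv0: "aV m v0 = v0" using g n NV.inv_act[OF g(1) v0] by simp
    have eE: "e \<in> E" "og e = v" using e unfolding Ev_def by auto
    define e' where "e' = aE (inv g) e"
    have e'E: "e' \<in> E" unfolding e'_def using ab_cl gi eE by blast
    have "og e' = v0" unfolding e'_def using ab_og[OF gi eE(1)] eE g NV.inv_act[OF g(1) v0] by simp
    then have "e' \<in> Ev v0" using e'E unfolding Ev_def by blast
    then have fix': "aE m e' = e'" using P0 mN mv0 unfolding Pv_def by blast
    have "aE n e = aE g (aE m e')"
    proof -
      have "aE g (aE m e') = aE (g \<otimes> m \<otimes> inv g) e"
        unfolding e'_def using g gi mc eE by (simp add: NE.a_mult ab_cl)
      also have "g \<otimes> m \<otimes> inv g = n" unfolding m_def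
        by (rule NV.conj_back[OF g(1) nc])
      finally show ?thesis by simp
    qed
    also have "\<dots> = e" using fix' e'_def NE.act_inv g eE by simp
    finally show "aE n e = e" .
  qed
qed

lemma free_iff: "(\<forall>v\<in>V. Pv v) \<longleftrightarrow> acts_freely_mod_kernel N V E aV aE"
proof
  assume P: "\<forall>v\<in>V. Pv v"
  show "acts_freely_mod_kernel N V E aV aE" unfolding acts_freely_mod_kernel_def
  proof (intro ballI impI)
    fix v n assume v: "v \<in> V" and n: "n \<in> N" "aV n v = v"
    have nc: "n \<in> carrier G" using NV.N_carr n by blast
    have fixV: "aV n w = w" if "(v, w) \<in> (adjacency E og rv)\<^sup>*" for w
      using that
    proof (induction rule: rtrancl_induct)
      case base then show ?case using n by simp
    next
      case (step y z)
      then obtain e where e: "e \<in> E" "y = og e" "z = og (rv e)" unfolding adjacency_def by blast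
      have "Pv y" using P gr e by blast
      then have "aE n e = e" using step.IH n e unfolding Pv_def Ev_def by blast
      then have "aE n (rv e) = rv e" using ab_rv[OF nc e(1)] by simp
      then show ?case using ab_og[OF nc gr(2)[OF e(1)]] e by simp
    qed
    have A: "(\<forall>w\<in>V. aV n w = w)" using fixV conn v by blast
    have B: "\<forall>e\<in>E. aE n e = e"
    proof
      fix e assume e: "e \<in> E"
      have "aV n (og e) = og e" using fixV conn v gr e by blast
      then show "aE n e = e" using P gr e n unfolding Pv_def Ev_def by blast
    qed
    show "(\<forall>w\<in>V. aV n w = w) \<and> (\<forall>e\<in>E. aE n e = e)" using A B by blast
  qed
next
  assume "acts_freely_mod_kernel N V E aV aE"
  then show "\<forall>v\<in>V. Pv v" unfolding acts_freely_mod_kernel_def Pv_def Ev_def by blast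
qed

lemma deg_eq_iff:
  "gdeg (qV N V aV) (qE N E aE) (qo N aV og) = gdeg V E og \<longleftrightarrow> acts_freely_mod_kernel N V E aV aE"
proof -
  obtain v0 where v0: "v0 \<in> V" using Vne by blast
  define D where "D = vdeg E og v0"
  have Dall: "\<And>v. v \<in> V \<Longrightarrow> vdeg E og v = D" unfolding D_def using vdeg_const v0 by blast
  have gD: "gdeg V E og = D"
  proof (rule antisym)
    show "gdeg V E og \<le> D" unfolding gdeg_def by (rule SUP_least) (simp add: Dall)
    show "D \<le> gdeg V E og" using vdeg_le_gdeg[OF v0] unfolding D_def .
  qed
  obtain d where d: "D = enat d" using Ev_fin[OF v0] unfolding D_def vdeg_Ev by auto
  let ?q = "\<lambda>v. vdeg (qE N E aE) (qo N aV og) (orbit N aV v)"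
  have qle: "\<And>v. v \<in> V \<Longrightarrow> ?q v \<le> D" using qvdeg_le Dall by metis
  show ?thesis
  proof
    assume eq: "gdeg (qV N V aV) (qE N E aE) (qo N aV og) = gdeg V E og"
    have "\<exists>v\<in>V. ?q v = D"
    proof (rule ccontr)
      assume "\<not> (\<exists>v\<in>V. ?q v = D)"
      then have lt: "\<And>v. v \<in> V \<Longrightarrow> ?q v < D" using qle order_le_neq_trans by blast
      then have d0: "d > 0" using v0 d by (metis enat_0_iff(1) not_gr_zero not_less_zero zero_enat_def)
      have "\<And>v. v \<in> V \<Longrightarrow> ?q v \<le> enat (d - 1)"
      proof -
        fix v assume "v \<in> V"
        then have "?q v < enat d" using lt d by simp
        then obtain k where "?q v = enat k" "k < d" by (metis enat_iless enat_ord_simps(2) less_infinityE)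
        then show "?q v \<le> enat (d - 1)" by simp
      qed
      then have "(SUP v\<in>V. ?q v) \<le> enat (d - 1)" by (rule SUP_least)
      moreover have "(SUP v\<in>V. ?q v) = enat d" using eq gD d qgdeg by simp
      ultimately show False using d0 by simp
    qed
    then obtain v where v: "v \<in> V" "?q v = vdeg E og v" using Dall by metis
    then have "Pv v" using qvdeg_eq by blast
    then show "acts_freely_mod_kernel N V E aV aE" using free_iff Pv_trans v by blast
  next
    assume "acts_freely_mod_kernel N V E aV aE"
    then have "\<forall>v\<in>V. Pv v" using free_iff by blast
    then have "\<And>v. v \<in> V \<Longrightarrow> ?q v = D" using qvdeg_eq Dall by metis
    then have "(SUP v\<in>V. ?q v) = D"
      by (metis (no_types, lifting) Vne SUP_constant SUP_cong)
    then show "gdeg (qV N V aV) (qE N E aE) (qo N aV og) = gdeg V E og" using gD qgdeg by simp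
  qed
qed

end



context mset begin

lemma carrQ: "C \<in> carrier (G Mod N) \<Longrightarrow> \<exists>g\<in>carrier G. C = N #> g"
  unfolding carrier_FactGroup by blast

lemma L1: "C \<in> carrier (G Mod N) \<Longrightarrow> bij_betw (qact aV C) (qV N V aV) (qV N V aV)"
  using carrQ NV.qact_bij qV_eq by metis

lemma L2: "C \<in> carrier (G Mod N) \<Longrightarrow> bij_betw (qact aE C) (qE N E aE) (qE N E aE)"
  using carrQ NE.qact_bij qE_eq by metis

lemma L3:
  assumes C: "C \<in> carrier (G Mod N)" and X: "X \<in> qE N E aE"
  shows "qo N aV og (qact aE C X) = qact aV C (qo N aV og X)"
    and "qrv rv (qact aE C X) = qact aE C (qrv rv X)"
proof -
  obtain g where g: "g \<in> carrier G" "C = N #> g" using carrQ[OF C] by blast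
  obtain e where e: "e \<in> E" "X = orbit N aE e" using X qE_eq by blast
  show "qo N aV og (qact aE C X) = qact aV C (qo N aV og X)"
    using g e NE.act_orb[OF g(1) e(1)] NV.act_orb[OF g(1) gr(1)[OF e(1)]] qo_orb[OF e(1)]
      qo_orb[OF ab_cl(2)[OF g(1) e(1)]] ab_og[OF g(1) e(1)] by simp
  show "qrv rv (qact aE C X) = qact aE C (qrv rv X)"
    using g e NE.act_orb[OF g(1) e(1)] NE.act_orb[OF g(1) gr(2)[OF e(1)]] qrv_orb[OF e(1)]
      qrv_orb[OF ab_cl(2)[OF g(1) e(1)]] ab_rv[OF g(1) e(1)] by simp
qed

lemma L5: "X \<in> qV N V aV \<Longrightarrow> qact aV \<one>\<^bsub>G Mod N\<^esub> X = X"
  "Y \<in> qE N E aE \<Longrightarrow> qact aE \<one>\<^bsub>G Mod N\<^esub> Y = Y"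
  using NV.qact_one NE.qact_one qV_eq qE_eq by auto

lemma L6:
  assumes C: "C \<in> carrier (G Mod N)" and D: "D \<in> carrier (G Mod N)"
  shows "X \<in> qV N V aV \<Longrightarrow> qact aV (C \<otimes>\<^bsub>G Mod N\<^esub> D) X = qact aV C (qact aV D X)"
    and "Y \<in> qE N E aE \<Longrightarrow> qact aE (C \<otimes>\<^bsub>G Mod N\<^esub> D) Y = qact aE C (qact aE D Y)"
proof -
  obtain g where g: "g \<in> carrier G" "C = N #> g" using carrQ[OF C] by blast
  obtain h where h: "h \<in> carrier G" "D = N #> h" using carrQ[OF D] by blast
  have Cs: "C \<subseteq> carrier G" "D \<subseteq> carrier G" using g h NV.r_coset_subset_G NV.N_sub by auto
  show "X \<in> qV N V aV \<Longrightarrow> qact aV (C \<otimes>\<^bsub>G Mod N\<^esub> D) X = qact aV C (qact aV D X)"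
    using NV.qact_mult[OF Cs] NV.orb_sub qV_eq by auto
  show "Y \<in> qE N E aE \<Longrightarrow> qact aE (C \<otimes>\<^bsub>G Mod N\<^esub> D) Y = qact aE C (qact aE D Y)"
    using NE.qact_mult[OF Cs] NE.orb_sub qE_eq by auto
qed

lemma q_ab: "acts_by_automorphisms (G Mod N) (qV N V aV) (qE N E aE) (qo N aV og) (qrv rv) (qact aV) (qact aE)"
  unfolding acts_by_automorphisms_def
  by (intro conjI ballI; simp add: L1 L2 L3 L5[simplified] L6[simplified])

lemma q_vt: "vertex_transitive (G Mod N) (qV N V aV) (qact aV)"
  unfolding vertex_transitive_def
proof (intro ballI)
  fix X Y assume XY: "X \<in> qV N V aV" "Y \<in> qV N V aV"
  have "X \<in> orbit N aV ` V" "Y \<in> orbit N aV ` V" using XY by (simp_all add: qV_eq)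
  then obtain u v where uv: "u \<in> V" "v \<in> V" "X = orbit N aV u" "Y = orbit N aV v" by (meson imageE)
  obtain g where g: "g \<in> carrier G" "aV g u = v" using vt uv(1,2) unfolding vertex_transitive_def by blast
  have "N #> g \<in> carrier (G Mod N)" using g unfolding carrier_FactGroup by blast
  moreover have "qact aV (N #> g) X = Y" using NV.act_orb[OF g(1) uv(1)] uv g by simp
  ultimately show "\<exists>C\<in>carrier (G Mod N). qact aV C X = Y" by blast
qed

end



context mset begin

lemma ts: "topspace T = carrier G" using tg unfolding topological_group_def by simp

lemma cinv: "continuous_map T T (\<lambda>x. inv x)" using tg unfolding topological_group_def by simp

lemma Qgrp: "group (G Mod N)" using NV.factorgroup_is_group .

lemma carrQ': "carrier (G Mod N) = rcosets N" by (simp add: FactGroup_def)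

lemma tsQ: "topspace (quot_top G T N) = carrier (G Mod N)"
  using topspace_quot[OF grp NV.sgN ts] carrQ' by simp

lemma projN: "continuous_map T (quot_top G T N) (\<lambda>g. N #> g)"
  using cont_proj[OF grp NV.sgN ts] .

lemma Nx_eq: "g \<in> carrier G \<Longrightarrow> x \<in> N #> g \<Longrightarrow> N #> x = N #> g \<and> x \<in> carrier G"
  using NV.repr_independence[of x N g] NV.sgN subgroup.elemrcos_carrier[OF NV.sgN grp] by metis

lemma Q_left: assumes C: "C \<in> carrier (G Mod N)"
  shows "continuous_map (quot_top G T N) (quot_top G T N) (\<lambda>X. C \<otimes>\<^bsub>G Mod N\<^esub> X)"
proof -
  obtain c where c: "c \<in> carrier G" "C = N #> c" using carrQ[OF C] by blast
  let ?h = "\<lambda>g. N #> (c \<otimes> g)"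
  have hc: "continuous_map T (quot_top G T N) ?h"
    using continuous_map_compose[OF tg_left[OF tg c(1)] projN] by (simp only: o_def)
  have wd: "?h x = ?h g" if "g \<in> carrier G" "x \<in> N #> g" for g x
  proof -
    have eq: "N #> x = N #> g" and xc: "x \<in> carrier G" using Nx_eq[OF that] by blast+
    have "N #> (c \<otimes> x) = (N #> c) <#> (N #> x)" using NV.rcos_sum[OF c(1) xc] by simp
    also have "\<dots> = (N #> c) <#> (N #> g)" using eq by simp
    also have "\<dots> = N #> (c \<otimes> g)" using NV.rcos_sum[OF c(1) that(1)] by simp
    finally show ?thesis .
  qed
  have F: "continuous_map (quot_top G T N) (quot_top G T N) (\<lambda>X. ?h (SOME x. x \<in> X))"
    and ev: "\<And>g. g \<in> carrier G \<Longrightarrow> ?h (SOME x. x \<in> N #> g) = ?h g"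
    using cont_quot_univ[OF grp NV.sgN ts hc wd] by blast+
  show ?thesis
  proof (rule continuous_map_eq[OF F])
    fix X assume "X \<in> topspace (quot_top G T N)"
    then obtain x where x: "x \<in> carrier G" "X = N #> x" using carrQ tsQ by blast
    show "?h (SOME x. x \<in> X) = C \<otimes>\<^bsub>G Mod N\<^esub> X"
      using ev[OF x(1)] x c NV.rcos_sum[OF c(1) x(1)] by simp
  qed
qed

lemma Q_inv: "continuous_map (quot_top G T N) (quot_top G T N) (\<lambda>X. inv\<^bsub>G Mod N\<^esub> X)"
proof -
  let ?h = "\<lambda>g. N #> inv g"
  have hc: "continuous_map T (quot_top G T N) ?h"
    using continuous_map_compose[OF cinv projN] by (simp only: o_def)
  have wd: "?h x = ?h g" if "g \<in> carrier G" "x \<in> N #> g" for g x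
  proof -
    have eq: "N #> x = N #> g" and xc: "x \<in> carrier G" using Nx_eq[OF that] by blast+
    have "N #> inv x = set_inv (N #> x)" using NV.rcos_inv[OF xc] by simp
    also have "\<dots> = set_inv (N #> g)" using eq by simp
    also have "\<dots> = N #> inv g" using NV.rcos_inv[OF that(1)] by simp
    finally show ?thesis .
  qed
  have F: "continuous_map (quot_top G T N) (quot_top G T N) (\<lambda>X. ?h (SOME x. x \<in> X))"
    and ev: "\<And>g. g \<in> carrier G \<Longrightarrow> ?h (SOME x. x \<in> N #> g) = ?h g"
    using cont_quot_univ[OF grp NV.sgN ts hc wd] by blast+
  show ?thesis
  proof (rule continuous_map_eq[OF F])
    fix X assume X: "X \<in> topspace (quot_top G T N)"
    then obtain x where x: "x \<in> carrier G" "X = N #> x" using carrQ tsQ by blast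
    have "inv\<^bsub>G Mod N\<^esub> X = set_inv X" using NV.inv_FactGroup X tsQ by simp
    then show "?h (SOME x. x \<in> X) = inv\<^bsub>G Mod N\<^esub> X"
      using ev[OF x(1)] x NV.rcos_inv[OF x(1)] by simp
  qed
qed

lemma K_sub: "subgroup (connected_component_of_set (quot_top G T N) N) (G Mod N)"
  using comp_subgroup[OF Qgrp tsQ Q_left Q_inv] by simp

lemma G0_sub: "subgroup (identity_component G T) G"
  unfolding identity_component_def
  using comp_subgroup[OF grp ts tg_left[OF tg] cinv] .

end



context mset begin

lemma Gv_facts:
  assumes v: "v \<in> V"
  shows "\<one> \<in> stabilizer G aV v" "stabilizer G aV v \<subseteq> carrier G"
    "\<And>x t. x \<in> carrier G \<Longrightarrow> t \<in> stabilizer G aV v \<Longrightarrow> aV (x \<otimes> t) v = aV x v"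
  using v NV.a_one NV.a_mult unfolding stabilizer_def by auto

lemma S1:
  assumes v: "v \<in> V" and g: "g \<in> carrier G"
  shows "N #> g \<in> stabilizer (G Mod N) (qact aV) (orbit N aV v) \<longleftrightarrow> aV g v \<in> orbit N aV v"
proof -
  have "N #> g \<in> carrier (G Mod N)" using g unfolding carrier_FactGroup by blast
  then have "N #> g \<in> stabilizer (G Mod N) (qact aV) (orbit N aV v) \<longleftrightarrow> orbit N aV (aV g v) = orbit N aV v"
    unfolding stabilizer_def using NV.act_orb[OF g v] by simp
  also have "\<dots> \<longleftrightarrow> aV g v \<in> orbit N aV v" using NV.orb_eq_iff[OF v ab_cl(1)[OF g v]] .
  finally show ?thesis .
qed

lemma stab_sub: "stabilizer (G Mod N) (qact aV) X \<subseteq> rcosets N"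
  unfolding stabilizer_def carrQ' by blast

lemma S2:
  assumes v: "v \<in> V"
  shows "\<Union>(stabilizer (G Mod N) (qact aV) (orbit N aV v)) = {x \<in> carrier G. aV x v \<in> orbit N aV v}"
    and "\<Union>(rcosets N - stabilizer (G Mod N) (qact aV) (orbit N aV v)) = {x \<in> carrier G. aV x v \<notin> orbit N aV v}"
proof -
  let ?U = "stabilizer (G Mod N) (qact aV) (orbit N aV v)"
  have "?U = {C \<in> rcosets N. C \<in> ?U}" using stab_sub by blast
  then have "\<Union>?U = {x \<in> carrier G. N #> x \<in> ?U}" using union_cosets[OF grp NV.sgN, of "\<lambda>C. C \<in> ?U"] by simp
  then show "\<Union>?U = {x \<in> carrier G. aV x v \<in> orbit N aV v}" using S1[OF v] by auto
  have "rcosets N - ?U = {C \<in> rcosets N. C \<notin> ?U}" by blast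
  then have "\<Union>(rcosets N - ?U) = {x \<in> carrier G. N #> x \<notin> ?U}" using union_cosets[OF grp NV.sgN, of "\<lambda>C. C \<notin> ?U"] by simp
  then show "\<Union>(rcosets N - ?U) = {x \<in> carrier G. aV x v \<notin> orbit N aV v}" using S1[OF v] by auto
qed

lemma S3:
  assumes v: "v \<in> V" and op: "openin T (stabilizer G aV v)"
  shows "openin (quot_top G T N) (stabilizer (G Mod N) (qact aV) (orbit N aV v))"
    and "closedin (quot_top G T N) (stabilizer (G Mod N) (qact aV) (orbit N aV v))"
proof -
  let ?U = "stabilizer (G Mod N) (qact aV) (orbit N aV v)"
  have o1: "openin T {x \<in> carrier G. aV x v \<in> orbit N aV v}"
    by (rule tg_open_right_closed[OF tg op Gv_facts(1)[OF v]]) (auto simp: NV.m_closed Gv_facts[OF v] subsetD[OF Gv_facts(2)[OF v]])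
  have o2: "openin T {x \<in> carrier G. aV x v \<notin> orbit N aV v}"
    by (rule tg_open_right_closed[OF tg op Gv_facts(1)[OF v]]) (auto simp: NV.m_closed Gv_facts[OF v] subsetD[OF Gv_facts(2)[OF v]])
  show "openin (quot_top G T N) ?U"
    unfolding openin_quot[OF grp NV.sgN] using stab_sub S2(1)[OF v] o1 by simp
  have "topspace (quot_top G T N) - ?U = rcosets N - ?U" using tsQ carrQ' by simp
  moreover have "openin (quot_top G T N) (rcosets N - ?U)"
    unfolding openin_quot[OF grp NV.sgN] using S2(2)[OF v] o2 by auto
  ultimately show "closedin (quot_top G T N) ?U"
    unfolding closedin_def using stab_sub tsQ carrQ' by simp
qed

lemma S5:
  assumes v: "v \<in> V" and op: "openin T (stabilizer G aV v)"
  shows "connected_component_of_set (quot_top G T N) N \<subseteq> stabilizer (G Mod N) (qact aV) (orbit N aV v)"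
proof -
  let ?U = "stabilizer (G Mod N) (qact aV) (orbit N aV v)"
  let ?K = "connected_component_of_set (quot_top G T N) N"
  have NQ: "N \<in> topspace (quot_top G T N)" using tsQ monoid.one_closed[OF group.is_monoid[OF Qgrp]] by simp
  have NK: "N \<in> ?K" using NQ connected_component_of_refl by fastforce
  have "N #> \<one> \<in> ?U" using S1[OF v NV.one_closed] NV.a_one[OF v] NV.orb_self[OF v] by simp
  then have NU: "N \<in> ?U" using NV.coset_mult_one[OF NV.N_sub] by simp
  have "?K \<subseteq> ?U \<or> disjnt ?K ?U"
    using connectedin_clopen_cases[OF connectedin_connected_component_of S3(2)[OF v op] S3(1)[OF v op]] .
  then show ?thesis using NK NU unfolding disjnt_def by blast
qed

lemma S6:
  assumes v: "v \<in> V"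
    and cpt: "compactin (quot_top G T (identity_component G T)) ((\<lambda>g. identity_component G T #> g) ` stabilizer G aV v)"
  shows "compactin (quot_top (G Mod N) (quot_top G T N) (connected_component_of_set (quot_top G T N) N))
      ((\<lambda>C. connected_component_of_set (quot_top G T N) N #>\<^bsub>G Mod N\<^esub> C) ` stabilizer (G Mod N) (qact aV) (orbit N aV v))"
proof -
  let ?U = "stabilizer (G Mod N) (qact aV) (orbit N aV v)"
  let ?K = "connected_component_of_set (quot_top G T N) N"
  let ?G0 = "identity_component G T"
  let ?Gv = "stabilizer G aV v"
  let ?h = "\<lambda>g. ?K #>\<^bsub>G Mod N\<^esub> (N #> g)"
  have Ksub: "?K \<subseteq> carrier (G Mod N)" using subgroup.subset[OF K_sub] .
  have p2: "continuous_map (quot_top G T N) (quot_top (G Mod N) (quot_top G T N) ?K) (\<lambda>C. ?K #>\<^bsub>G Mod N\<^esub> C)"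
    using cont_proj[OF Qgrp K_sub tsQ] .
  have hc: "continuous_map T (quot_top (G Mod N) (quot_top G T N) ?K) ?h"
    using continuous_map_compose[OF projN p2] by (simp only: o_def)
  have G0K: "N #> z \<in> ?K" if z: "z \<in> ?G0" for z
  proof -
    have "connectedin (quot_top G T N) ((\<lambda>g. N #> g) ` ?G0)"
      unfolding identity_component_def
      by (rule connectedin_continuous_map_image[OF projN connectedin_connected_component_of])
    moreover have "N \<in> (\<lambda>g. N #> g) ` ?G0"
      using subgroup.one_closed[OF G0_sub] NV.coset_mult_one[OF NV.N_sub] by (metis image_eqI)
    ultimately have "(\<lambda>g. N #> g) ` ?G0 \<subseteq> ?K" by (rule connected_component_of_maximal)
    then show ?thesis using z by blast
  qed
  have wd: "?h x = ?h g" if g: "g \<in> carrier G" and x: "x \<in> ?G0 #> g" for g x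
  proof -
    obtain z where z: "z \<in> ?G0" "x = z \<otimes> g" using x unfolding r_coset_def by blast
    have zc: "z \<in> carrier G" using z subgroup.subset[OF G0_sub] by blast
    have zK: "N #> z \<in> ?K" using G0K z by blast
    have zQ: "N #> z \<in> carrier (G Mod N)" "N #> g \<in> carrier (G Mod N)"
      using zc g unfolding carrier_FactGroup by blast+
    have "N #> x = (N #> z) \<otimes>\<^bsub>G Mod N\<^esub> (N #> g)" using NV.rcos_sum[OF zc g] z by simp
    then have "?h x = (?K #>\<^bsub>G Mod N\<^esub> (N #> z)) #>\<^bsub>G Mod N\<^esub> (N #> g)"
      using group.coset_mult_assoc[OF Qgrp Ksub zQ] by simp
    also have "?K #>\<^bsub>G Mod N\<^esub> (N #> z) = ?K"
      using group.coset_join2[OF Qgrp zQ(1) K_sub zK] .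
    finally show ?thesis .
  qed
  have F: "continuous_map (quot_top G T ?G0) (quot_top (G Mod N) (quot_top G T N) ?K) (\<lambda>C. ?h (SOME x. x \<in> C))"
    and ev: "\<And>g. g \<in> carrier G \<Longrightarrow> ?h (SOME x. x \<in> ?G0 #> g) = ?h g"
    using cont_quot_univ[OF grp G0_sub ts hc wd] by blast+
  have "compactin (quot_top (G Mod N) (quot_top G T N) ?K) ((\<lambda>C. ?h (SOME x. x \<in> C)) ` (\<lambda>g. ?G0 #> g) ` ?Gv)"
    by (rule image_compactin[OF cpt F])
  moreover have "(\<lambda>C. ?h (SOME x. x \<in> C)) ` (\<lambda>g. ?G0 #> g) ` ?Gv = ?h ` ?Gv"
  proof -
    have "\<And>s. s \<in> ?Gv \<Longrightarrow> ?h (SOME x. x \<in> ?G0 #> s) = ?h s" using ev unfolding stabilizer_def by blast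
    then show ?thesis by (simp add: image_image)
  qed
  moreover have "?h ` ?Gv = (\<lambda>C. ?K #>\<^bsub>G Mod N\<^esub> C) ` ?U"
  proof
    show "?h ` ?Gv \<subseteq> (\<lambda>C. ?K #>\<^bsub>G Mod N\<^esub> C) ` ?U"
    proof
      fix y assume "y \<in> ?h ` ?Gv"
      then obtain s where s: "s \<in> ?Gv" "y = ?h s" by blast
      have sc: "s \<in> carrier G" "aV s v = v" using s unfolding stabilizer_def by auto
      have "N #> s \<in> ?U" using S1[OF v sc(1)] sc NV.orb_self[OF v] by simp
      then show "y \<in> (\<lambda>C. ?K #>\<^bsub>G Mod N\<^esub> C) ` ?U" using s by blast
    qed
    show "(\<lambda>C. ?K #>\<^bsub>G Mod N\<^esub> C) ` ?U \<subseteq> ?h ` ?Gv"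
    proof
      fix y assume "y \<in> (\<lambda>C. ?K #>\<^bsub>G Mod N\<^esub> C) ` ?U"
      then obtain C where C: "C \<in> ?U" "y = ?K #>\<^bsub>G Mod N\<^esub> C" by blast
      have "C \<in> carrier (G Mod N)" using C unfolding stabilizer_def by blast
      then obtain g where g: "g \<in> carrier G" "C = N #> g" using carrQ by blast
      have "aV g v \<in> orbit N aV v" using S1[OF v g(1)] C g by simp
      then obtain n where n: "n \<in> N" "aV g v = aV n v" unfolding orbit_def by blast
      have nc: "n \<in> carrier G" "inv n \<in> N" using n NV.N_carr NV.N_inv by auto
      define s where "s = inv n \<otimes> g"
      have sc: "s \<in> carrier G" unfolding s_def using nc g by simp
      have "aV s v = aV (inv n) (aV n v)" unfolding s_def using nc g v n NV.a_mult by simp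
      then have "aV s v = v" using NV.inv_act[OF nc(1) v] by simp
      then have sGv: "s \<in> ?Gv" using sc unfolding stabilizer_def by blast
      have "s \<in> N #> g" unfolding s_def r_coset_def using nc by blast
      then have "N #> g = N #> s" using Nx_eq[OF g(1)] by metis
      then have "y = ?h s" using C g by simp
      then show "y \<in> ?h ` ?Gv" using sGv by blast
    qed
  qed
  ultimately show ?thesis by simp
qed

lemma q_cag:
  assumes ca: "cayley_abels_graph G T V E og rv aV aE"
  shows "cayley_abels_graph (G Mod N) (quot_top G T N) (qV N V aV) (qE N E aE)
              (qo N aV og) (qrv rv) (qact aV) (qact aE)"
  unfolding cayley_abels_graph_def
proof (intro conjI ballI)
  show "connected_graph (qV N V aV) (qE N E aE) (qo N aV og) (qrv rv)" by (rule q_connected)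
  show "finite_degree (qV N V aV) (qE N E aE) (qo N aV og)"
    using qgdeg_le fd unfolding finite_degree_def by (rule order_le_less_trans)
  show "acts_by_automorphisms (G Mod N) (qV N V aV) (qE N E aE) (qo N aV og) (qrv rv) (qact aV) (qact aE)"
    by (rule q_ab)
  show "vertex_transitive (G Mod N) (qV N V aV) (qact aV)" by (rule q_vt)
  fix X assume X: "X \<in> qV N V aV"
  then obtain v where v: "v \<in> V" "X = orbit N aV v" using qV_eq by (metis imageE)
  have op: "openin T (stabilizer G aV v)" and cbc: "connected_by_compact G T (stabilizer G aV v)"
    using ca v unfolding cayley_abels_graph_def by blast+
  show "openin (quot_top G T N) (stabilizer (G Mod N) (qact aV) X)" using S3(1)[OF v(1) op] v by simp
  have cpt: "compactin (quot_top G T (identity_component G T)) ((\<lambda>g. identity_component G T #> g) ` stabilizer G aV v)"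
    using cbc unfolding connected_by_compact_def Let_def by blast
  have idQ: "identity_component (G Mod N) (quot_top G T N) = connected_component_of_set (quot_top G T N) N"
    unfolding identity_component_def by simp
  show "connected_by_compact (G Mod N) (quot_top G T N) (stabilizer (G Mod N) (qact aV) X)"
    unfolding connected_by_compact_def Let_def idQ
    using S5[OF v(1) op] S6[OF v(1) cpt] v by simp
qed

end

theorem mainTheorem4:
  fixes G :: "('g,'m) monoid_scheme" and T :: "'g topology" and N :: "'g set"
    and V :: "'v set" and E :: "'e set" and og :: "'e \<Rightarrow> 'v" and rv :: "'e \<Rightarrow> 'e"
    and aV :: "'g \<Rightarrow> 'v \<Rightarrow> 'v" and aE :: "'g \<Rightarrow> 'e \<Rightarrow> 'e"
  assumes "locally_compact_group G T"
    and "compactly_generated G T"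
    and "normal N G" and "closedin T N"
    and "connected_graph V E og rv" and "finite_degree V E og"
    and "acts_by_automorphisms G V E og rv aV aE" and "vertex_transitive G V aV"
  shows "(cayley_abels_graph G T V E og rv aV aE \<longrightarrow>
           cayley_abels_graph (G Mod N) (quot_top G T N) (qV N V aV) (qE N E aE)
              (qo N aV og) (qrv rv) (qact aV) (qact aE))
       \<and> gdeg (qV N V aV) (qE N E aE) (qo N aV og) \<le> gdeg V E og
       \<and> (gdeg (qV N V aV) (qE N E aE) (qo N aV og) = gdeg V E og
            \<longleftrightarrow> acts_freely_mod_kernel N V E aV aE)"
proof -
  have tg: "topological_group G T" using assms(1) unfolding locally_compact_group_def by simp
  interpret M: mset G T N V E og rv aV aE
    by (rule mset.intro[OF tg assms(3) assms(5) assms(6) assms(7) assms(8)])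
  show ?thesis using M.q_cag M.qgdeg_le M.deg_eq_iff by blast
qed


end
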